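(* Let $n\ge 1$. There is exactly one rooted binary tree (up to isomorphism) with $n$ leaves of minimal Sackin index if and only if there exists an integer $m\ge 0$ with $n\in\{2^m-1,\,2^m,\,2^m+1\}$.
   Context: A rooted binary tree is either a single vertex (both root and leaf), or a finite tree with a distinguished root of degree 2 whose other non-leaf vertices have degree 3; trees are considered up to isomorphism of rooted trees (leaves unlabeled). The Sackin index is $\mathcal S(T)=\sum_{x\text{ leaf}}\delta_x$, with $\delta_x$ the number of edges from the root to $x$. *)

theory Defs
  imports Main
begin

text \<open>Rooted binary trees as plane (ordered) trees; isomorphism of rooted trees
  (leaves unlabeled) is the equivalence allowing the two children of any
  inner vertex to be swapped.\<close>

datatype btree = Leaf | Node btree btree

fun leaves :: "btree \<Rightarrow> nat" where
  "leaves Leaf = 1"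
| "leaves (Node l r) = leaves l + leaves r"

text \<open>Sackin index: sum over leaves of the depth. Each leaf of a subtree gains
  one edge when the subtree is hung below a new root.\<close>
fun sackin :: "btree \<Rightarrow> nat" where
  "sackin Leaf = 0"
| "sackin (Node l r) = sackin l + sackin r + leaves l + leaves r"

fun iso :: "btree \<Rightarrow> btree \<Rightarrow> bool" where
  "iso Leaf Leaf = True"
| "iso (Node a b) (Node c d) = ((iso a c \<and> iso b d) \<or> (iso a d \<and> iso b c))"
| "iso _ _ = False"

definition sackin_minimal :: "nat \<Rightarrow> btree \<Rightarrow> bool" where
  "sackin_minimal n T \<longleftrightarrow> leaves T = n \<and> (\<forall>T'. leaves T' = n \<longrightarrow> sackin T \<le> sackin T')"

end

theory Submission
  imports Defs "HOL-Library.Discrete_Functions"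
begin

definition h :: "nat \<Rightarrow> nat \<Rightarrow> int" where
  "h n t = int n * (int t + 2) - 2^(t+1)"

definition G :: "nat \<Rightarrow> int" where
  "G n = h n (floor_log n)"

lemma h_Suc: "h n (Suc t) = h n t + int n - 2^(t+1)"
  unfolding h_def by (simp add: algebra_simps)

lemma h_up: "t \<le> s \<Longrightarrow> 2^s \<le> n \<Longrightarrow> h n t \<le> h n s"
proof (induction s rule: dec_induct)
  case base then show ?case by simp
next
  case (step s)
  have "(2::int)^(s+1) \<le> 2^(Suc s)" by simp
  also have "\<dots> \<le> int n" using step.prems by (metis of_nat_le_iff of_nat_numeral of_nat_power)
  finally have "h n s \<le> h n (Suc s)" by (simp add: h_Suc)
  moreover have "2^s \<le> n" using step.prems
    by (meson le_trans one_le_numeral power_increasing le_SucI order_refl)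
  ultimately show ?case using step.IH by simp
qed

lemma h_down: "s \<le> t \<Longrightarrow> h n t \<le> h n s + int (t-s) * (int n - 2^(s+1))"
proof (induction t rule: dec_induct)
  case base then show ?case by simp
next
  case (step t)
  have "(2::int)^(s+1) \<le> 2^(t+1)" by (rule power_increasing) (use step.hyps(1) in auto)
  then have "h n (Suc t) \<le> h n t + (int n - 2^(s+1))" by (simp add: h_Suc)
  also have "\<dots> \<le> h n s + int (t-s) * (int n - 2^(s+1)) + (int n - 2^(s+1))"
    using step.IH by simp
  also have "\<dots> = h n s + int (Suc t-s) * (int n - 2^(s+1))"
    using step.hyps by (simp add: Suc_diff_le algebra_simps)
  finally show ?case .
qed

lemma hmax:
  assumes "n \<ge> 1"
  shows "h n t \<le> G n \<and> (h n t = G n \<longleftrightarrow> 2^t \<le> n \<and> n \<le> 2^(t+1))"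
proof -
  define k where "k = floor_log n"
  have k1: "2^k \<le> n" using floor_log_exp2_le[of n] assms by (simp add: k_def)
  have k2: "n < 2*2^k" using floor_log_exp2_gt[of n] by (simp add: k_def)
  have G: "G n = h n k" by (simp add: G_def k_def)
  consider "t = k" | "t < k" | "k < t" by linarith
  then show ?thesis
  proof cases
    case 1 then show ?thesis using k1 k2 G by simp
  next
    case 2
    have a: "h n (Suc t) \<le> h n k" using h_up[of "Suc t" k n] 2 k1 by simp
    have p: "(2::nat)^(t+1) \<le> 2^k" by (rule power_increasing) (use 2 in auto)
    then have p': "(2::int)^(t+1) \<le> int n" using k1
      by (metis le_trans of_nat_le_iff of_nat_numeral of_nat_power)
    have le: "h n t \<le> G n" using a p' G by (simp add: h_Suc)
    have "h n t = G n \<longleftrightarrow> 2^t \<le> n \<and> n \<le> 2^(t+1)"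
    proof
      assume e: "h n t = G n"
      then have "int n \<le> 2^(t+1)" using a G by (simp add: h_Suc)
      then have "n \<le> 2^(t+1)" by (metis of_nat_le_iff of_nat_numeral of_nat_power)
      moreover have "2^t \<le> n" using p k1 by simp
      ultimately show "2^t \<le> n \<and> n \<le> 2^(t+1)" by simp
    next
      assume "2^t \<le> n \<and> n \<le> 2^(t+1)"
      then have "n = 2^(t+1)" "2^(t+1) = (2::nat)^k" using p k1 by auto
      then have "t+1 = k" using power_inject_exp[of "2::nat" "t+1" k] by presburger
      then show "h n t = G n" using G \<open>n = 2^(t+1)\<close> by (auto simp: h_Suc)
    qed
    then show ?thesis using le by simp
  next
    case 3
    have d: "h n t \<le> h n k + int (t-k) * (int n - 2^(k+1))" using h_down[of k t n] 3 by simp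
    have "int n < 2^(k+1)" using k2 by (metis of_nat_less_iff of_nat_numeral of_nat_power power_Suc Suc_eq_plus1)
    moreover have "int (t-k) > 0" using 3 by simp
    ultimately have "int (t-k) * (int n - 2^(k+1)) < 0" by (simp add: mult_pos_neg)
    then have lt: "h n t < G n" using d G 3 by (simp add: of_nat_diff)
    have "\<not> 2^t \<le> n"
    proof
      assume "2^t \<le> n"
      moreover have "(2::nat)^(k+1) \<le> 2^t" by (rule power_increasing) (use 3 in auto)
      ultimately show False using k2 by simp
    qed
    then show ?thesis using lt by simp
  qed
qed

lemma leaves_pos: "leaves T \<ge> 1"
  by (induction T) auto

lemma iso_leaves: "iso T T' \<Longrightarrow> leaves T = leaves T'"
  by (induction T T' rule: iso.induct) auto

lemma fl_bounds: "n \<ge> 1 \<Longrightarrow> 2^floor_log n \<le> n \<and> n < 2*2^floor_log n"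
  using floor_log_exp2_le[of n] floor_log_exp2_gt[of n] by simp

lemma G_split:
  assumes "a \<ge> 1" "b \<ge> 1" "floor_log (a+b) = Suc j"
  shows "G (a+b) = h a j + h b j + int a + int b"
  using assms unfolding G_def h_def by (simp add: algebra_simps)

lemma fl_pos: "n \<ge> 2 \<Longrightarrow> floor_log n \<ge> 1"
  using fl_bounds[of n] by (cases "floor_log n") auto

lemma lower: "G (leaves T) \<le> int (sackin T)"
proof (induction T)
  case Leaf then show ?case by (simp add: G_def h_def)
next
  case (Node l r)
  define a where "a = leaves l"
  define b where "b = leaves r"
  have a1: "a \<ge> 1" "b \<ge> 1" using leaves_pos a_def b_def by auto
  obtain j where j: "floor_log (a+b) = Suc j" using fl_pos[of "a+b"] a1
    by (cases "floor_log (a+b)") auto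
  have "G (a+b) = h a j + h b j + int a + int b" using G_split a1 j by simp
  also have "\<dots> \<le> G a + G b + int a + int b" using hmax[of a j] hmax[of b j] a1 by simp
  also have "\<dots> \<le> int (sackin (Node l r))" using Node a_def b_def by simp
  finally show ?case by (simp add: a_def b_def)
qed

definition good :: "nat \<Rightarrow> nat \<Rightarrow> nat \<Rightarrow> bool" where
  "good n a b \<longleftrightarrow> 2^(floor_log n - 1) \<le> a \<and> a \<le> 2^floor_log n
     \<and> 2^(floor_log n - 1) \<le> b \<and> b \<le> 2^floor_log n"

lemma good_iff:
  assumes "a \<ge> 1" "b \<ge> 1" "floor_log (a+b) = Suc j"
  shows "good (a+b) a b \<longleftrightarrow> h a j = G a \<and> h b j = G b"
  using hmax[of a j] hmax[of b j] assms unfolding good_def by auto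

lemma exists_min: "n \<ge> 1 \<Longrightarrow> \<exists>T. leaves T = n \<and> int (sackin T) = G n"
proof (induction n rule: less_induct)
  case (less n)
  show ?case
  proof (cases "n = 1")
    case True then show ?thesis by (intro exI[of _ Leaf]) (simp add: G_def h_def)
  next
    case False
    then have n2: "n \<ge> 2" using less.prems by simp
    obtain j where j: "floor_log n = Suc j" using fl_pos[OF n2] by (cases "floor_log n") auto
    define P where "P = (2::nat)^j"
    have P1: "P \<ge> 1" by (simp add: P_def)
    have bnd: "2*P \<le> n" "n < 4*P" using fl_bounds[of n] n2 j by (auto simp: P_def)
    define a where "a = n div 2"
    define b where "b = n - a"
    have ab: "a \<ge> 1" "b \<ge> 1" "a < n" "b < n" "a + b = n" using n2 by (auto simp: a_def b_def)
    have g: "good n a b" unfolding good_def j using bnd P_def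
      by (simp add: a_def b_def) linarith?
    obtain Ta where Ta: "leaves Ta = a" "int (sackin Ta) = G a" using less.IH[of a] ab by auto
    obtain Tb where Tb: "leaves Tb = b" "int (sackin Tb) = G b" using less.IH[of b] ab by auto
    have "G n = h a j + h b j + int a + int b" using G_split[of a b j] ab j by simp
    also have "\<dots> = G a + G b + int a + int b" using good_iff[of a b j] ab j g by simp
    finally show ?thesis using Ta Tb ab by (intro exI[of _ "Node Ta Tb"]) simp
  qed
qed

lemma minimal_iff: "n \<ge> 1 \<Longrightarrow> sackin_minimal n T \<longleftrightarrow> leaves T = n \<and> int (sackin T) = G n"
proof -
  assume n: "n \<ge> 1"
  obtain T0 where T0: "leaves T0 = n" "int (sackin T0) = G n" using exists_min[OF n] by auto
  show ?thesis
  proof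
    assume "sackin_minimal n T"
    then have L: "leaves T = n" and "sackin T \<le> sackin T0" using T0 unfolding sackin_minimal_def by auto
    then have "int (sackin T) \<le> int (sackin T0)" by simp
    moreover have "G n \<le> int (sackin T)" using lower[of T] L by simp
    ultimately show "leaves T = n \<and> int (sackin T) = G n" using L T0 by linarith
  next
    assume "leaves T = n \<and> int (sackin T) = G n"
    then show "sackin_minimal n T" unfolding sackin_minimal_def using lower
      by (metis of_nat_le_iff)
  qed
qed

lemma minimal_Node:
  "sackin_minimal n (Node l r) \<longleftrightarrow> n = leaves l + leaves r \<and> sackin_minimal (leaves l) l
     \<and> sackin_minimal (leaves r) r \<and> good n (leaves l) (leaves r)"
proof -
  define a where "a = leaves l"
  define b where "b = leaves r"
  have a1: "a \<ge> 1" "b \<ge> 1" using leaves_pos a_def b_def by auto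
  obtain j where j: "floor_log (a+b) = Suc j" using fl_pos[of "a+b"] a1
    by (cases "floor_log (a+b)") auto
  have e: "G (a+b) = h a j + h b j + int a + int b" using G_split a1 j by simp
  have i1: "h a j \<le> G a" "h b j \<le> G b" using hmax[of a j] hmax[of b j] a1 by auto
  have i2: "G a \<le> int (sackin l)" "G b \<le> int (sackin r)" using lower a_def b_def by auto
  have s: "int (sackin (Node l r)) = int (sackin l) + int (sackin r) + int a + int b"
    by (simp add: a_def b_def)
  have ml: "sackin_minimal a l \<longleftrightarrow> int (sackin l) = G a" using minimal_iff[OF a1(1)] a_def by simp
  have mr: "sackin_minimal b r \<longleftrightarrow> int (sackin r) = G b" using minimal_iff[OF a1(2)] b_def by simp
  have gi: "good (a+b) a b \<longleftrightarrow> h a j = G a \<and> h b j = G b" using good_iff[OF a1 j] .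
  have "sackin_minimal n (Node l r) \<longleftrightarrow> n = a + b \<and> sackin_minimal a l
     \<and> sackin_minimal b r \<and> good n a b"
  proof
    assume M: "sackin_minimal n (Node l r)"
    then have n: "n = a + b" unfolding sackin_minimal_def a_def b_def by simp
    then have "int (sackin (Node l r)) = G (a+b)" using M minimal_iff[of n "Node l r"] a1 by simp
    then have "int (sackin l) = G a \<and> int (sackin r) = G b \<and> h a j = G a \<and> h b j = G b"
      using e i1 i2 s by linarith
    then show "n = a + b \<and> sackin_minimal a l \<and> sackin_minimal b r \<and> good n a b"
      using n ml mr gi by simp
  next
    assume A: "n = a + b \<and> sackin_minimal a l \<and> sackin_minimal b r \<and> good n a b"
    then have "h a j = G a" "h b j = G b" "int (sackin l) = G a" "int (sackin r) = G b"
      using gi ml mr by auto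
    moreover have "G n = G (a+b)" using A by simp
    ultimately have "int (sackin (Node l r)) = G n" using e s by linarith
    then show "sackin_minimal n (Node l r)" using minimal_iff[of n "Node l r"] a1 A
      by (simp add: a_def b_def)
  qed
  then show ?thesis by (simp add: a_def b_def)
qed


definition U :: "nat \<Rightarrow> bool" where
  "U n \<longleftrightarrow> (\<exists>m::nat. n = 2^m - 1 \<or> n = 2^m \<or> n = 2^m + 1)"

lemma good_fl: "good n a b \<Longrightarrow> floor_log n = Suc j \<Longrightarrow>
   2^j \<le> a \<and> a \<le> 2*2^j \<and> 2^j \<le> b \<and> b \<le> 2*2^j"
  unfolding good_def by simp

lemma split_pow: "n = 2*2^j \<Longrightarrow> a+b=n \<Longrightarrow> good n a b \<Longrightarrow> a = 2^j \<and> b = 2^j"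
proof -
  assume n: "n = 2*2^j" and ab: "a+b=n" and g: "good n a b"
  have "floor_log n = Suc j" using n by (metis floor_log_power power_Suc)
  from good_fl[OF g this] show ?thesis using ab n by linarith
qed

lemma split_pow1: "n = 2*2^j + 1 \<Longrightarrow> a+b=n \<Longrightarrow> good n a b \<Longrightarrow>
   (a = 2^j \<and> b = 2^j+1) \<or> (a = 2^j+1 \<and> b = 2^j)"
proof -
  assume n: "n = 2*2^j + 1" and ab: "a+b=n" and g: "good n a b"
  have P: "(1::nat) \<le> 2^j" by simp
  have "floor_log n = Suc j" 
  proof (rule floor_log_eqI)
    have e: "(2::nat)^Suc j = 2*2^j" by simp
    show "0 < n" using n P by linarith
    show "2^Suc j \<le> n" unfolding e using n P by linarith
    show "n < 2*2^Suc j" unfolding e using n P by linarith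
  qed
  from good_fl[OF g this] show ?thesis using ab n by linarith
qed

lemma split_powm1: "n = 4*2^j - 1 \<Longrightarrow> a+b=n \<Longrightarrow> good n a b \<Longrightarrow>
   (a = 2*2^j - 1 \<and> b = 2*2^j) \<or> (a = 2*2^j \<and> b = 2*2^j - 1)"
proof -
  assume n: "n = 4*2^j - 1" and ab: "a+b=n" and g: "good n a b"
  have P: "(1::nat) \<le> 2^j" by simp
  have "floor_log n = Suc j" 
  proof (rule floor_log_eqI)
    have e: "(2::nat)^Suc j = 2*2^j" by simp
    show "0 < n" using n P by linarith
    show "2^Suc j \<le> n" unfolding e using n P by linarith
    show "n < 2*2^Suc j" unfolding e using n P by linarith
  qed
  from good_fl[OF g this] show ?thesis using ab n P by linarith
qed

lemma U_pow: "U (2^j)" "U (2^j + 1)" "U (2*2^j - 1)" "U (2*2^j)"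
  unfolding U_def by (metis power_Suc)+

lemma U_split:
  assumes "U n" "n \<ge> 2" "a+b=n" "good n a b" "a'+b'=n" "good n a' b'"
  shows "U a \<and> U b \<and> (a = a' \<or> a = b')"
proof -
  obtain m where m: "n = 2^m - 1 \<or> n = 2^m \<or> n = 2^m + 1" using assms(1) U_def by auto
  have A: ?thesis if "n = 2*2^j" for j
    using split_pow[OF that assms(3,4)] split_pow[OF that assms(5,6)] U_pow by simp
  have B: ?thesis if "n = 2*2^j+1" for j
    using split_pow1[OF that assms(3,4)] split_pow1[OF that assms(5,6)] U_pow by auto
  have C: ?thesis if "n = 4*2^j-1" for j
    using split_powm1[OF that assms(3,4)] split_powm1[OF that assms(5,6)] U_pow by auto
  show ?thesis
  proof (cases m)
    case 0
    then have "n = 2*2^0" using m assms(2) by auto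
    then show ?thesis using A by blast
  next
    case (Suc j)
    then consider "n = 2*2^j - 1" | "n = 2*2^j" | "n = 2*2^j+1" using m by auto
    then show ?thesis
    proof cases
      case 1
      then show ?thesis
      proof (cases j)
        case 0 then show ?thesis using 1 assms(2) by simp
      next
        case (Suc i) then show ?thesis using 1 C[of i] by simp
      qed
    qed (use A B in auto)
  qed
qed

lemma leaves1: "leaves T = 1 \<Longrightarrow> T = Leaf"
proof (cases T)
  case (Node l r)
  assume "leaves T = 1"
  then show ?thesis using Node leaves_pos[of l] leaves_pos[of r] by simp
qed simp

lemma unique:
  "n \<ge> 1 \<Longrightarrow> U n \<Longrightarrow> sackin_minimal n T1 \<Longrightarrow> sackin_minimal n T2 \<Longrightarrow> iso T1 T2"
proof (induction n arbitrary: T1 T2 rule: less_induct)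
  case (less n)
  show ?case
  proof (cases "n = 1")
    case True
    have "T1 = Leaf" "T2 = Leaf" using less.prems True leaves1 unfolding sackin_minimal_def by auto
    then show ?thesis by simp
  next
    case False
    then have n2: "n \<ge> 2" using less.prems by simp
    obtain l1 r1 where T1: "T1 = Node l1 r1" using less.prems n2 unfolding sackin_minimal_def
      by (cases T1) auto
    obtain l2 r2 where T2: "T2 = Node l2 r2" using less.prems n2 unfolding sackin_minimal_def
      by (cases T2) auto
    have M1: "n = leaves l1 + leaves r1" "sackin_minimal (leaves l1) l1"
     "sackin_minimal (leaves r1) r1" "good n (leaves l1) (leaves r1)"
      using less.prems(3) T1 minimal_Node by auto
    have M2: "n = leaves l2 + leaves r2" "sackin_minimal (leaves l2) l2"
     "sackin_minimal (leaves r2) r2" "good n (leaves l2) (leaves r2)"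
      using less.prems(4) T2 minimal_Node by auto
    have S: "U (leaves l1) \<and> U (leaves r1) \<and> (leaves l1 = leaves l2 \<or> leaves l1 = leaves r2)"
      using U_split[OF less.prems(2) n2 M1(1)[symmetric] M1(4) M2(1)[symmetric] M2(4)] .
    have lt: "leaves l1 < n" "leaves r1 < n" using M1(1) leaves_pos[of l1] leaves_pos[of r1] by auto
    have p: "leaves l1 \<ge> 1" "leaves r1 \<ge> 1" using leaves_pos by auto
    show ?thesis
    proof (cases "leaves l1 = leaves l2")
      case True
      then have "leaves r1 = leaves r2" using M1(1) M2(1) by simp
      then show ?thesis using less.IH[OF lt(1) p(1)] less.IH[OF lt(2) p(2)] S True M1 M2 T1 T2 by simp
    next
      case False
      then have e: "leaves l1 = leaves r2" "leaves r1 = leaves l2" using S M1(1) M2(1) by auto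
      then show ?thesis using less.IH[OF lt(1) p(1)] less.IH[OF lt(2) p(2)] S M1 M2 T1 T2 by simp
    qed
  qed
qed


lemma min_exists': "n \<ge> 1 \<Longrightarrow> \<exists>T. sackin_minimal n T"
  using exists_min minimal_iff by blast

lemma min_leaves: "sackin_minimal n T \<Longrightarrow> leaves T = n"
  unfolding sackin_minimal_def by simp

lemma nonunique:
  assumes n1: "n \<ge> 1" and nU: "\<not> U n" and T: "sackin_minimal n T"
    and uq: "\<forall>T'. sackin_minimal n T' \<longrightarrow> iso T T'"
  shows False
proof -
  have "U 1" unfolding U_def by (intro exI[of _ 0]) simp
  then have n2: "n \<ge> 2" using n1 nU by (cases "n = 1") auto
  obtain j where j: "floor_log n = Suc j" using fl_pos[OF n2] by (cases "floor_log n") auto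
  define P where "P = (2::nat)^j"
  have P1: "P \<ge> 1" by (simp add: P_def)
  have bnd: "2*P \<le> n" "n < 4*P" using fl_bounds[of n] n2 j by (auto simp: P_def)
  have u12: "U (2*P)" "U(2*P+1)" unfolding U_def P_def by (rule exI[of _ "Suc j"]; simp)+
  have u3: "U(4*P-1)" unfolding U_def P_def by (rule exI[of _ "Suc (Suc j)"]; simp)
  have nb: "n \<noteq> 2*P" "n \<noteq> 2*P+1" "n \<noteq> 4*P-1" using nU u12 u3 by auto
  define a1 where "a1 = n div 2"
  define b1 where "b1 = n - a1"
  define a2 where "a2 = a1 - 1"
  define b2 where "b2 = n - a2"
  have dv: "a1 * 2 \<le> n" "n \<le> a1*2 + 1" unfolding a1_def by auto
  have ar: "P \<le> a2" "a2 < a1" "a1 \<le> b1" "b1 < b2" "b2 \<le> 2*P" "a1 + b1 = n" "a2 + b2 = n"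
    using bnd nb dv P1 unfolding a2_def b1_def b2_def by linarith+
  have g1: "good n a1 b1" and g2: "good n a2 b2" unfolding good_def j using ar by (simp_all add: P_def)
  have pos: "a1 \<ge> 1" "b1 \<ge> 1" "a2 \<ge> 1" "b2 \<ge> 1" using ar P1 by linarith+
  obtain L1 R1 L2 R2 where LR: "sackin_minimal a1 L1" "sackin_minimal b1 R1"
     "sackin_minimal a2 L2" "sackin_minimal b2 R2" using min_exists' pos by meson
  have M1: "sackin_minimal n (Node L1 R1)" using LR ar g1 minimal_Node min_leaves by metis
  have M2: "sackin_minimal n (Node L2 R2)" using LR ar g2 minimal_Node min_leaves by metis
  obtain l r where Tn: "T = Node l r" using T n2 leaves1 unfolding sackin_minimal_def
    by (cases T) auto
  have i1: "iso (Node l r) (Node L1 R1)" and i2: "iso (Node l r) (Node L2 R2)"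
    using uq M1 M2 Tn by auto
  have "leaves l = a1 \<or> leaves l = b1"
    using i1 iso_leaves min_leaves LR by auto
  moreover have "leaves l = a2 \<or> leaves l = b2"
    using i2 iso_leaves min_leaves LR by auto
  ultimately show False using ar by linarith
qed

theorem mainTheorem14:
  fixes n :: nat
  assumes "n \<ge> 1"
  shows "(\<exists>T. sackin_minimal n T \<and> (\<forall>T'. sackin_minimal n T' \<longrightarrow> iso T T'))
     \<longleftrightarrow> (\<exists>m::nat. n = 2^m - 1 \<or> n = 2^m \<or> n = 2^m + 1)"
proof
  assume "\<exists>T. sackin_minimal n T \<and> (\<forall>T'. sackin_minimal n T' \<longrightarrow> iso T T')"
  then show "\<exists>m::nat. n = 2^m - 1 \<or> n = 2^m \<or> n = 2^m + 1"
    using nonunique[OF assms] unfolding U_def by blast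
next
  assume "\<exists>m::nat. n = 2^m - 1 \<or> n = 2^m \<or> n = 2^m + 1"
  then have "U n" unfolding U_def .
  obtain T where "sackin_minimal n T" using min_exists' assms by blast
  then show "\<exists>T. sackin_minimal n T \<and> (\<forall>T'. sackin_minimal n T' \<longrightarrow> iso T T')"
    using unique[OF assms \<open>U n\<close>] by blast
qed

end
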